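(* For all $\lambda\mu\mathrm{T}$-terms $t_1,t_2$: if $t_1=t_2$ in $\lambda\mu\mathrm{T}$, then $t_1^*=t_2^*$ in Gödel's T.
   Context: The calculus $\lambda\mu\mathrm{T}$. Types: $\rho ::= \mathbb{N} \mid \sigma\to\tau$. Over infinite sets of $\lambda$-variables $x,y,\dots$ and $\mu$-variables $\alpha,\beta,\gamma,\dots$, terms and commands are mutually defined by $t,r,s ::= x \mid \lambda x{:}\rho.r \mid t\,s \mid \mu\alpha{:}\rho.c \mid 0 \mid \mathsf{S}\,t \mid \mathsf{nrec}_\rho\ r\ s\ t$ and $c ::= [\alpha]t$ (type annotations often omitted). $FCV(t)$ denotes the free $\mu$-variables; $t[x:=r]$ is capture-avoiding substitution. Numerals: $\underline{n} := \mathsf{S}^n 0$. Contexts: $E ::= \Box \mid E\,t \mid \mathsf{S}\,E \mid \mathsf{nrec}\ r\ s\ E$; $E[u]$ fills the hole with $u$. Structural substitution $t[\alpha:=\beta E]$ is defined homomorphically on all constructs (capture-avoiding) except $([\alpha]u)[\alpha:=\beta E] := [\beta]E[u[\alpha:=\beta E]]$ (and $([\gamma]u)[\alpha:=\beta E]:=[\gamma](u[\alpha:=\beta E])$ for $\gamma\neq\alpha$). Reduction $\to$ of $\lambda\mu\mathrm{T}$ is the compatible closure (on terms and commands) of: ($\beta$) $(\lambda x.t)r\to t[x:=r]$; ($\mu\mathsf{S}$) $\mathsf{S}(\mu\alpha.c)\to\mu\alpha.c[\alpha:=\alpha(\mathsf{S}\,\Box)]$; ($\mu R$) $(\mu\alpha.c)s\to\mu\alpha.c[\alpha:=\alpha(\Box\,s)]$;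 ($\mu\eta$) $\mu\alpha.[\alpha]t\to t$ if $\alpha\notin FCV(t)$; ($\mu i$) $[\alpha]\mu\beta.c\to c[\beta:=\alpha\,\Box]$; ($0$) $\mathsf{nrec}\ r\ s\ 0\to r$; ($\mathsf{S}$) $\mathsf{nrec}\ r\ s\ (\mathsf{S}\,\underline{n})\to s\ \underline{n}\ (\mathsf{nrec}\ r\ s\ \underline{n})$; ($\mu\mathbb{N}$) $\mathsf{nrec}\ r\ s\ (\mu\alpha.c)\to\mu\alpha.c[\alpha:=\alpha(\mathsf{nrec}\ r\ s\ \Box)]$; $=$ is its reflexive–symmetric–transitive closure. Gödel's T ($\lambda\mathrm{T}$) has terms $t ::= x\mid\lambda x{:}\rho.r\mid ts\mid 0\mid\mathsf{S}\,t\mid\mathsf{nrec}_\rho\ r\ s\ t$, reduction the compatible closure of $(\lambda x.t)r\to t[x:=r]$, $\mathsf{nrec}\ r\ s\ 0\to r$, $\mathsf{nrec}\ r\ s\ (\mathsf{S}\,t)\to s\ t\ (\mathsf{nrec}\ r\ s\ t)$, and conversion $=$ its reflexive–symmetric–transitive closure. CPS-translation: for $\lambda\mathrm{T}$-terms, $t\circ r:=\lambda k.t(\lambda l.l\,r\,k)$ and $\overline{t}:=\lambda k.k\,t$ (fresh $k,l$). To each $\mu$-variable $\alpha$ associate a fresh $\lambda$-variable $k_\alpha$. The translation is: $x^*:=\lambda k.xk$; $(\lambda x.t)^*:=\lambda k.k(\lambda x.t^* )$; $(tr)^*:=t^*\circ r^*$; $0^*:=\overline{0}$; $(\mathsf{S}\,t)^*:=\lambda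 k.t^*(\lambda l.k(\mathsf{S}\,l))$; $(\mathsf{nrec}_\rho\ r\ s\ t)^*:=\lambda k.t^*(\lambda l.\mathsf{nrec}\ r^*\ s'\ l\ k)$ where $s':=\lambda x p.(s^*\circ\overline{x})\circ p$; $(\mu\alpha.c)^*:=\lambda k_\alpha.c^*$; $([\alpha]t)^*:=t^*k_\alpha$. *)

theory Defs
  imports Main
begin

section \<open>lambda-mu-T: untyped syntax with de Bruijn indices\<close>

text \<open>Two separate index spaces: LVar i refers to lambda-binders (LLam),
  the index of LNamed a u refers to mu-binders (LMu).\<close>

datatype lmtm =
    LVar nat
  | LLam lmtm
  | LApp lmtm lmtm
  | LMu lmcmd
  | LZero
  | LSuc lmtm
  | LNrec lmtm lmtm lmtm
and lmcmd = LNamed nat lmtm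

datatype ectx = Hole | EApp ectx lmtm | ESuc ectx | ENrec lmtm lmtm ectx

primrec fill :: "ectx \<Rightarrow> lmtm \<Rightarrow> lmtm" where
  "fill Hole u = u"
| "fill (EApp E t) u = LApp (fill E u) t"
| "fill (ESuc E) u = LSuc (fill E u)"
| "fill (ENrec r s E) u = LNrec r s (fill E u)"

primrec liftLt :: "nat \<Rightarrow> lmtm \<Rightarrow> lmtm" and liftLc :: "nat \<Rightarrow> lmcmd \<Rightarrow> lmcmd" where
  "liftLt k (LVar i) = LVar (if i < k then i else Suc i)"
| "liftLt k (LLam t) = LLam (liftLt (Suc k) t)"
| "liftLt k (LApp t s) = LApp (liftLt k t) (liftLt k s)"
| "liftLt k (LMu c) = LMu (liftLc k c)"
| "liftLt k LZero = LZero"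
| "liftLt k (LSuc t) = LSuc (liftLt k t)"
| "liftLt k (LNrec r s t) = LNrec (liftLt k r) (liftLt k s) (liftLt k t)"
| "liftLc k (LNamed a u) = LNamed a (liftLt k u)"

primrec liftMt :: "nat \<Rightarrow> lmtm \<Rightarrow> lmtm" and liftMc :: "nat \<Rightarrow> lmcmd \<Rightarrow> lmcmd" where
  "liftMt k (LVar i) = LVar i"
| "liftMt k (LLam t) = LLam (liftMt k t)"
| "liftMt k (LApp t s) = LApp (liftMt k t) (liftMt k s)"
| "liftMt k (LMu c) = LMu (liftMc (Suc k) c)"
| "liftMt k LZero = LZero"
| "liftMt k (LSuc t) = LSuc (liftMt k t)"
| "liftMt k (LNrec r s t) = LNrec (liftMt k r) (liftMt k s) (liftMt k t)"
| "liftMc k (LNamed a u) = LNamed (if a < k then a else Suc a) (liftMt k u)"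

text \<open>Removal of a mu-binder index k that does not occur: indices above k go down by one.\<close>
primrec dropMt :: "nat \<Rightarrow> lmtm \<Rightarrow> lmtm" and dropMc :: "nat \<Rightarrow> lmcmd \<Rightarrow> lmcmd" where
  "dropMt k (LVar i) = LVar i"
| "dropMt k (LLam t) = LLam (dropMt k t)"
| "dropMt k (LApp t s) = LApp (dropMt k t) (dropMt k s)"
| "dropMt k (LMu c) = LMu (dropMc (Suc k) c)"
| "dropMt k LZero = LZero"
| "dropMt k (LSuc t) = LSuc (dropMt k t)"
| "dropMt k (LNrec r s t) = LNrec (dropMt k r) (dropMt k s) (dropMt k t)"
| "dropMc k (LNamed a u) = LNamed (if a < k then a else a - 1) (dropMt k u)"

primrec liftLe :: "nat \<Rightarrow> ectx \<Rightarrow> ectx" where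
  "liftLe k Hole = Hole"
| "liftLe k (EApp E t) = EApp (liftLe k E) (liftLt k t)"
| "liftLe k (ESuc E) = ESuc (liftLe k E)"
| "liftLe k (ENrec r s E) = ENrec (liftLt k r) (liftLt k s) (liftLe k E)"

primrec liftMe :: "nat \<Rightarrow> ectx \<Rightarrow> ectx" where
  "liftMe k Hole = Hole"
| "liftMe k (EApp E t) = EApp (liftMe k E) (liftMt k t)"
| "liftMe k (ESuc E) = ESuc (liftMe k E)"
| "liftMe k (ENrec r s E) = ENrec (liftMt k r) (liftMt k s) (liftMe k E)"

primrec fcvt :: "lmtm \<Rightarrow> nat set" and fcvc :: "lmcmd \<Rightarrow> nat set" where
  "fcvt (LVar i) = {}"
| "fcvt (LLam t) = fcvt t"
| "fcvt (LApp t s) = fcvt t \<union> fcvt s"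
| "fcvt (LMu c) = {j. Suc j \<in> fcvc c}"
| "fcvt LZero = {}"
| "fcvt (LSuc t) = fcvt t"
| "fcvt (LNrec r s t) = fcvt r \<union> fcvt s \<union> fcvt t"
| "fcvc (LNamed a u) = insert a (fcvt u)"

primrec substLt :: "nat \<Rightarrow> lmtm \<Rightarrow> lmtm \<Rightarrow> lmtm" and substLc :: "nat \<Rightarrow> lmtm \<Rightarrow> lmcmd \<Rightarrow> lmcmd" where
  "substLt k r (LVar i) = (if i < k then LVar i else if i = k then r else LVar (i - 1))"
| "substLt k r (LLam t) = LLam (substLt (Suc k) (liftLt 0 r) t)"
| "substLt k r (LApp t s) = LApp (substLt k r t) (substLt k r s)"
| "substLt k r (LMu c) = LMu (substLc k (liftMt 0 r) c)"
| "substLt k r LZero = LZero"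
| "substLt k r (LSuc t) = LSuc (substLt k r t)"
| "substLt k r (LNrec r' s t) = LNrec (substLt k r r') (substLt k r s) (substLt k r t)"
| "substLc k r (LNamed a u) = LNamed a (substLt k r u)"

text \<open>Structural substitution t[alpha := beta E] (alpha = index k, beta = index b):
  every command [k]u becomes [b]E[u[k:=b E]]; other commands are left unchanged.\<close>
primrec msubt :: "nat \<Rightarrow> nat \<Rightarrow> ectx \<Rightarrow> lmtm \<Rightarrow> lmtm"
  and msubc :: "nat \<Rightarrow> nat \<Rightarrow> ectx \<Rightarrow> lmcmd \<Rightarrow> lmcmd" where
  "msubt k b E (LVar i) = LVar i"
| "msubt k b E (LLam t) = LLam (msubt k b (liftLe 0 E) t)"
| "msubt k b E (LApp t s) = LApp (msubt k b E t) (msubt k b E s)"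
| "msubt k b E (LMu c) = LMu (msubc (Suc k) (Suc b) (liftMe 0 E) c)"
| "msubt k b E LZero = LZero"
| "msubt k b E (LSuc t) = LSuc (msubt k b E t)"
| "msubt k b E (LNrec r s t) = LNrec (msubt k b E r) (msubt k b E s) (msubt k b E t)"
| "msubc k b E (LNamed a u) =
     (if a = k then LNamed b (fill E (msubt k b E u)) else LNamed a (msubt k b E u))"

definition lnum :: "nat \<Rightarrow> lmtm" where
  "lnum n = (LSuc ^^ n) LZero"

inductive lmred_t :: "lmtm \<Rightarrow> lmtm \<Rightarrow> bool" and lmred_c :: "lmcmd \<Rightarrow> lmcmd \<Rightarrow> bool" where
  beta: "lmred_t (LApp (LLam t) r) (substLt 0 r t)"
| muS: "lmred_t (LSuc (LMu c)) (LMu (msubc 0 0 (ESuc Hole) c))"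
| muR: "lmred_t (LApp (LMu c) s) (LMu (msubc 0 0 (EApp Hole (liftMt 0 s)) c))"
| muEta: "0 \<notin> fcvt t \<Longrightarrow> lmred_t (LMu (LNamed 0 t)) (dropMt 0 t)"
| muI: "lmred_c (LNamed a (LMu c)) (dropMc 0 (msubc 0 (Suc a) Hole c))"
| nrec0: "lmred_t (LNrec r s LZero) r"
| nrecS: "lmred_t (LNrec r s (LSuc (lnum n))) (LApp (LApp s (lnum n)) (LNrec r s (lnum n)))"
| muN: "lmred_t (LNrec r s (LMu c)) (LMu (msubc 0 0 (ENrec (liftMt 0 r) (liftMt 0 s) Hole) c))"
| c_lam: "lmred_t t t' \<Longrightarrow> lmred_t (LLam t) (LLam t')"
| c_appL: "lmred_t t t' \<Longrightarrow> lmred_t (LApp t s) (LApp t' s)"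
| c_appR: "lmred_t s s' \<Longrightarrow> lmred_t (LApp t s) (LApp t s')"
| c_mu: "lmred_c c c' \<Longrightarrow> lmred_t (LMu c) (LMu c')"
| c_suc: "lmred_t t t' \<Longrightarrow> lmred_t (LSuc t) (LSuc t')"
| c_nrec1: "lmred_t r r' \<Longrightarrow> lmred_t (LNrec r s t) (LNrec r' s t)"
| c_nrec2: "lmred_t s s' \<Longrightarrow> lmred_t (LNrec r s t) (LNrec r s' t)"
| c_nrec3: "lmred_t t t' \<Longrightarrow> lmred_t (LNrec r s t) (LNrec r s t')"
| c_named: "lmred_t t t' \<Longrightarrow> lmred_c (LNamed a t) (LNamed a t')"

definition lmconv :: "lmtm \<Rightarrow> lmtm \<Rightarrow> bool" where
  "lmconv = equivclp lmred_t"

section \<open>Goedel's T: untyped syntax with de Bruijn indices\<close>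

datatype tm = Var nat | Lam tm | App tm tm | Zero | TSuc tm | Nrec tm tm tm

primrec liftT :: "nat \<Rightarrow> tm \<Rightarrow> tm" where
  "liftT k (Var i) = Var (if i < k then i else Suc i)"
| "liftT k (Lam t) = Lam (liftT (Suc k) t)"
| "liftT k (App t s) = App (liftT k t) (liftT k s)"
| "liftT k Zero = Zero"
| "liftT k (TSuc t) = TSuc (liftT k t)"
| "liftT k (Nrec r s t) = Nrec (liftT k r) (liftT k s) (liftT k t)"

primrec substT :: "nat \<Rightarrow> tm \<Rightarrow> tm \<Rightarrow> tm" where
  "substT k r (Var i) = (if i < k then Var i else if i = k then r else Var (i - 1))"
| "substT k r (Lam t) = Lam (substT (Suc k) (liftT 0 r) t)"
| "substT k r (App t s) = App (substT k r t) (substT k r s)"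
| "substT k r Zero = Zero"
| "substT k r (TSuc t) = TSuc (substT k r t)"
| "substT k r (Nrec r' s t) = Nrec (substT k r r') (substT k r s) (substT k r t)"

inductive Tred :: "tm \<Rightarrow> tm \<Rightarrow> bool" where
  beta: "Tred (App (Lam t) r) (substT 0 r t)"
| nrec0: "Tred (Nrec r s Zero) r"
| nrecS: "Tred (Nrec r s (TSuc t)) (App (App s t) (Nrec r s t))"
| c_lam: "Tred t t' \<Longrightarrow> Tred (Lam t) (Lam t')"
| c_appL: "Tred t t' \<Longrightarrow> Tred (App t s) (App t' s)"
| c_appR: "Tred s s' \<Longrightarrow> Tred (App t s) (App t s')"
| c_suc: "Tred t t' \<Longrightarrow> Tred (TSuc t) (TSuc t')"
| c_nrec1: "Tred r r' \<Longrightarrow> Tred (Nrec r s t) (Nrec r' s t)"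
| c_nrec2: "Tred s s' \<Longrightarrow> Tred (Nrec r s t) (Nrec r s' t)"
| c_nrec3: "Tred t t' \<Longrightarrow> Tred (Nrec r s t) (Nrec r s t')"

definition Tconv :: "tm \<Rightarrow> tm \<Rightarrow> bool" where
  "Tconv = equivclp Tred"

text \<open>t \<circ> r := \<lambda>k. t (\<lambda>l. l r k)\<close>
definition comp :: "tm \<Rightarrow> tm \<Rightarrow> tm" where
  "comp t r = Lam (App (liftT 0 t) (Lam (App (App (Var 0) (liftT 0 (liftT 0 r))) (Var 1))))"

definition ovl :: "tm \<Rightarrow> tm" where
  "ovl t = Lam (App (Var 0) (liftT 0 t))"

text \<open>cpst L M t: L (resp. M) gives the T-index of each lambda-variable x
  (resp. of the variable k_alpha associated to each mu-variable alpha).\<close>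
primrec cpst :: "(nat \<Rightarrow> nat) \<Rightarrow> (nat \<Rightarrow> nat) \<Rightarrow> lmtm \<Rightarrow> tm"
  and cpsc :: "(nat \<Rightarrow> nat) \<Rightarrow> (nat \<Rightarrow> nat) \<Rightarrow> lmcmd \<Rightarrow> tm" where
  "cpst L M (LVar i) = Lam (App (Var (Suc (L i))) (Var 0))"
| "cpst L M (LLam t) =
     Lam (App (Var 0) (Lam (cpst (case_nat 0 (\<lambda>i. Suc (Suc (L i)))) (\<lambda>j. Suc (Suc (M j))) t)))"
| "cpst L M (LApp t r) = comp (cpst L M t) (cpst L M r)"
| "cpst L M (LMu c) = Lam (cpsc (\<lambda>i. Suc (L i)) (case_nat 0 (\<lambda>j. Suc (M j))) c)"
| "cpst L M LZero = ovl Zero"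
| "cpst L M (LSuc t) = Lam (App (liftT 0 (cpst L M t)) (Lam (App (Var 1) (TSuc (Var 0)))))"
| "cpst L M (LNrec r s t) =
     (let s' = Lam (Lam (comp (comp (liftT 0 (liftT 0 (cpst L M s))) (ovl (Var 1))) (Var 0)))
      in Lam (App (liftT 0 (cpst L M t))
                  (Lam (App (Nrec (liftT 0 (liftT 0 (cpst L M r))) (liftT 0 (liftT 0 s')) (Var 0))
                            (Var 1)))))"
| "cpsc L M (LNamed a t) = App (cpst L M t) (Var (M a))"

text \<open>Top-level translation: free lambda-variable i becomes T-variable 2i,
  and k_alpha for free mu-variable j is the T-variable 2j+1 (all distinct).\<close>
definition cps :: "lmtm \<Rightarrow> tm" where
  "cps t = cpst (\<lambda>i. 2 * i) (\<lambda>j. 2 * j + 1) t"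

end

theory Submission
  imports Defs
begin


primrec upr :: "(nat \<Rightarrow> nat) \<Rightarrow> nat \<Rightarrow> nat" where
  "upr f 0 = 0" | "upr f (Suc i) = Suc (f i)"

primrec ren :: "(nat \<Rightarrow> nat) \<Rightarrow> tm \<Rightarrow> tm" where
  "ren f (Var i) = Var (f i)"
| "ren f (Lam t) = Lam (ren (upr f) t)"
| "ren f (App t s) = App (ren f t) (ren f s)"
| "ren f Zero = Zero"
| "ren f (TSuc t) = TSuc (ren f t)"
| "ren f (Nrec r s t) = Nrec (ren f r) (ren f s) (ren f t)"

definition up :: "(nat \<Rightarrow> tm) \<Rightarrow> nat \<Rightarrow> tm" where
  "up \<sigma> i = (case i of 0 \<Rightarrow> Var 0 | Suc j \<Rightarrow> ren Suc (\<sigma> j))"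

primrec sub :: "(nat \<Rightarrow> tm) \<Rightarrow> tm \<Rightarrow> tm" where
  "sub \<sigma> (Var i) = \<sigma> i"
| "sub \<sigma> (Lam t) = Lam (sub (up \<sigma>) t)"
| "sub \<sigma> (App t s) = App (sub \<sigma> t) (sub \<sigma> s)"
| "sub \<sigma> Zero = Zero"
| "sub \<sigma> (TSuc t) = TSuc (sub \<sigma> t)"
| "sub \<sigma> (Nrec r s t) = Nrec (sub \<sigma> r) (sub \<sigma> s) (sub \<sigma> t)"

lemma upr_comp: "(\<lambda>a. upr f (upr g a)) = upr (\<lambda>a. f (g a))"
  by (rule ext, rename_tac z, case_tac z) auto

lemma ren_ren: "ren f (ren g t) = ren (\<lambda>a. f (g a)) t"
  by (induction t arbitrary: f g) (auto simp: upr_comp)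

lemma sub_ren: "sub \<sigma> (ren f t) = sub (\<lambda>a. \<sigma> (f a)) t"
proof (induction t arbitrary: \<sigma> f)
  case (Lam t)
  have "(\<lambda>a. up \<sigma> (upr f a)) = up (\<lambda>a. \<sigma> (f a))" by (rule ext, rename_tac z, case_tac z) (auto simp: up_def)
  then show ?case using Lam by simp
qed auto

lemma ren_sub: "ren f (sub \<sigma> t) = sub (\<lambda>a. ren f (\<sigma> a)) t"
proof (induction t arbitrary: \<sigma> f)
  case (Lam t)
  have "(\<lambda>a. ren (upr f) (up \<sigma> a)) = up (\<lambda>a. ren f (\<sigma> a))"
  proof (rule ext)
    fix x show "ren (upr f) (up \<sigma> x) = up (\<lambda>a. ren f (\<sigma> a)) x"
    proof (cases x)
      case (Suc j)
      have "(\<lambda>a. upr f (Suc a)) = (\<lambda>a. Suc (f a))" by auto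
      then show ?thesis using Suc by (simp add: up_def ren_ren)
    qed (simp add: up_def)
  qed
  then show ?case using Lam by simp
qed auto

lemma sub_sub: "sub \<sigma> (sub \<tau> t) = sub (\<lambda>a. sub \<sigma> (\<tau> a)) t"
proof (induction t arbitrary: \<sigma> \<tau>)
  case (Lam t)
  have "(\<lambda>a. sub (up \<sigma>) (up \<tau> a)) = up (\<lambda>a. sub \<sigma> (\<tau> a))"
  proof (rule ext)
    fix x show "sub (up \<sigma>) (up \<tau> x) = up (\<lambda>a. sub \<sigma> (\<tau> a)) x"
    proof (cases x)
      case (Suc j)
      have "(\<lambda>a. up \<sigma> (Suc a)) = (\<lambda>a. ren Suc (\<sigma> a))" by (auto simp: up_def)
      then show ?thesis using Suc by (simp add: up_def sub_ren ren_sub)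
    qed (simp add: up_def)
  qed
  then show ?case using Lam by simp
qed auto

lemma ren_as_sub: "ren f t = sub (\<lambda>a. Var (f a)) t"
proof (induction t arbitrary: f)
  case (Lam t)
  have "up (\<lambda>a. Var (f a)) = (\<lambda>a. Var (upr f a))" by (rule ext, rename_tac z, case_tac z) (auto simp: up_def)
  then show ?case using Lam by simp
qed auto

lemma sub_Var: "sub Var t = t"
proof (induction t)
  case (Lam t)
  have "up Var = Var" by (rule ext, rename_tac z, case_tac z) (auto simp: up_def)
  then show ?case using Lam by simp
qed auto

lemma up_eq: "up \<sigma> = case_nat (Var 0) (\<lambda>j. sub (\<lambda>i. Var (Suc i)) (\<sigma> j))"
  by (rule ext, rename_tac z, case_tac z) (auto simp: up_def ren_as_sub comp_def)

lemma liftT_ren: "liftT k t = ren (\<lambda>i. if i < k then i else Suc i) t"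
proof (induction t arbitrary: k)
  case (Lam t)
  have "upr (\<lambda>i. if i < k then i else Suc i) = (\<lambda>i. if i < Suc k then i else Suc i)"
    by (rule ext, rename_tac z, case_tac z) auto
  then show ?case using Lam by simp
qed auto

lemma liftT_sub: "liftT k t = sub (\<lambda>i. Var (if i < k then i else Suc i)) t"
  by (simp add: liftT_ren ren_as_sub comp_def)

lemma substT_sub: "substT k r t = sub (\<lambda>i. if i < k then Var i else if i = k then r else Var (i - 1)) t"
proof (induction t arbitrary: k r)
  case (Lam t)
  have "up (\<lambda>i. if i < k then Var i else if i = k then r else Var (i - 1))
      = (\<lambda>i. if i < Suc k then Var i else if i = Suc k then liftT 0 r else Var (i - 1))"
    by (rule ext, rename_tac z, case_tac z) (auto simp: up_def liftT_ren)
  then show ?case using Lam by simp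
qed auto


lemma sub_up_simp [simp]: "up \<sigma> = case_nat (Var 0) (\<lambda>j. sub (\<lambda>i. Var (Suc i)) (\<sigma> j))"
  by (rule up_eq)

lemmas subst_simps [simp] = liftT_sub substT_sub sub_sub

lemma sub_Var' [simp]: "sub Var t = t" by (rule sub_Var)

lemma Tred_sub: "Tred a b \<Longrightarrow> Tred (sub \<sigma> a) (sub \<sigma> b)"
proof (induction arbitrary: \<sigma> rule: Tred.induct)
  case (beta t r)
  have "sub \<sigma> (substT 0 r t) = substT 0 (sub \<sigma> r) (sub (up \<sigma>) t)"
    by (simp del: sub_up_simp, simp, rule arg_cong[where f="\<lambda>f. sub f t"], rule ext, rename_tac z, case_tac z, simp_all)
  then show ?case by (simp only: sub.simps) (metis Tred.beta sub.simps(2))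
qed (auto intro: Tred.intros)

lemma equivclp_map: "(\<And>a b. r a b \<Longrightarrow> r (f a) (f b)) \<Longrightarrow> equivclp r a b \<Longrightarrow> equivclp r (f a) (f b)"
proof -
  assume h: "\<And>a b. r a b \<Longrightarrow> r (f a) (f b)" and e: "equivclp r a b"
  from e show ?thesis
  proof (induction rule: equivclp_induct)
    case base then show ?case by simp
  next
    case (step y z)
    then show ?case using h equivclp_into_equivclp by metis
  qed
qed

lemma Tconv_refl [simp]: "Tconv a a" by (simp add: Tconv_def)
lemma Tconv_sym: "Tconv a b \<Longrightarrow> Tconv b a" by (simp add: Tconv_def equivclp_sym)
lemma Tconv_trans [trans]: "Tconv a b \<Longrightarrow> Tconv b c \<Longrightarrow> Tconv a c" unfolding Tconv_def by (rule equivclp_trans)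
lemma Tred_conv: "Tred a b \<Longrightarrow> Tconv a b" by (auto simp: Tconv_def)
lemma Tconv_eqR: "Tconv a b \<Longrightarrow> b = c \<Longrightarrow> Tconv a c" by simp

lemma Tconv_sub: "Tconv a b \<Longrightarrow> Tconv (sub \<sigma> a) (sub \<sigma> b)"
  unfolding Tconv_def by (rule equivclp_map[where f="sub \<sigma>"]) (auto intro: Tred_sub)

lemma Tconv_lift: "Tconv a b \<Longrightarrow> Tconv (liftT k a) (liftT k b)"
  by (simp only: liftT_sub) (rule Tconv_sub)

lemma Tconv_Lam: "Tconv a b \<Longrightarrow> Tconv (Lam a) (Lam b)"
  unfolding Tconv_def by (rule equivclp_map[where f="Lam"]) (auto intro: Tred.intros)
lemma Tconv_TSuc: "Tconv a b \<Longrightarrow> Tconv (TSuc a) (TSuc b)"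
  unfolding Tconv_def by (rule equivclp_map[where f="TSuc"]) (auto intro: Tred.intros)
lemma Tconv_AppL: "Tconv a b \<Longrightarrow> Tconv (App a c) (App b c)"
  unfolding Tconv_def by (rule equivclp_map[where f="\<lambda>x. App x c"]) (auto intro: Tred.intros)
lemma Tconv_AppR: "Tconv a b \<Longrightarrow> Tconv (App c a) (App c b)"
  unfolding Tconv_def by (rule equivclp_map[where f="\<lambda>x. App c x"]) (auto intro: Tred.intros)
lemma Tconv_App: "Tconv a b \<Longrightarrow> Tconv c d \<Longrightarrow> Tconv (App a c) (App b d)"
  by (meson Tconv_AppL Tconv_AppR Tconv_trans)
lemma Tconv_N1: "Tconv a b \<Longrightarrow> Tconv (Nrec a c d) (Nrec b c d)"
  unfolding Tconv_def by (rule equivclp_map[where f="\<lambda>x. Nrec x c d"]) (auto intro: Tred.intros)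
lemma Tconv_N2: "Tconv a b \<Longrightarrow> Tconv (Nrec c a d) (Nrec c b d)"
  unfolding Tconv_def by (rule equivclp_map[where f="\<lambda>x. Nrec c x d"]) (auto intro: Tred.intros)
lemma Tconv_N3: "Tconv a b \<Longrightarrow> Tconv (Nrec c d a) (Nrec c d b)"
  unfolding Tconv_def by (rule equivclp_map[where f="\<lambda>x. Nrec c d x"]) (auto intro: Tred.intros)

lemma beta_eq: "u = sub (case_nat r Var) t \<Longrightarrow> Tconv (App (Lam t) r) u"
proof -
  assume u: "u = sub (case_nat r Var) t"
  have "substT 0 r t = u" unfolding u
    by (simp, rule arg_cong[where f="\<lambda>f. sub f t"], rule ext, rename_tac z, case_tac z, simp_all)
  then show ?thesis using Tred.beta[of t r] Tred_conv by metis
qed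

lemma sub_comp [simp]: "sub \<sigma> (comp a b) = comp (sub \<sigma> a) (sub \<sigma> b)"
  by (simp add: comp_def)
lemma sub_ovl [simp]: "sub \<sigma> (ovl a) = ovl (sub \<sigma> a)"
  by (simp add: ovl_def)



definition sp :: "tm \<Rightarrow> tm" where
  "sp S = Lam (Lam (comp (comp (liftT 0 (liftT 0 S)) (ovl (Var 1))) (Var 0)))"

lemma sub_sp [simp]: "sub \<sigma> (sp a) = sp (sub \<sigma> a)"
  by (simp add: sp_def)

primrec cpsG :: "(nat \<Rightarrow> tm) \<Rightarrow> (nat \<Rightarrow> tm) \<Rightarrow> lmtm \<Rightarrow> tm"
  and cpscG :: "(nat \<Rightarrow> tm) \<Rightarrow> (nat \<Rightarrow> tm) \<Rightarrow> lmcmd \<Rightarrow> tm" where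
  "cpsG \<rho> \<kappa> (LVar i) = Lam (App (liftT 0 (\<rho> i)) (Var 0))"
| "cpsG \<rho> \<kappa> (LLam t) =
     Lam (App (Var 0) (Lam (cpsG (case_nat (Var 0) (\<lambda>i. liftT 0 (liftT 0 (\<rho> i)))) (\<lambda>j. liftT 0 (liftT 0 (\<kappa> j))) t)))"
| "cpsG \<rho> \<kappa> (LApp t r) = comp (cpsG \<rho> \<kappa> t) (cpsG \<rho> \<kappa> r)"
| "cpsG \<rho> \<kappa> (LMu c) = Lam (cpscG (\<lambda>i. liftT 0 (\<rho> i)) (case_nat (Var 0) (\<lambda>j. liftT 0 (\<kappa> j))) c)"
| "cpsG \<rho> \<kappa> LZero = ovl Zero"
| "cpsG \<rho> \<kappa> (LSuc t) = Lam (App (liftT 0 (cpsG \<rho> \<kappa> t)) (Lam (App (Var 1) (TSuc (Var 0)))))"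
| "cpsG \<rho> \<kappa> (LNrec r s t) =
     Lam (App (liftT 0 (cpsG \<rho> \<kappa> t))
              (Lam (App (Nrec (liftT 0 (liftT 0 (cpsG \<rho> \<kappa> r))) (liftT 0 (liftT 0 (sp (cpsG \<rho> \<kappa> s)))) (Var 0))
                        (Var 1))))"
| "cpscG \<rho> \<kappa> (LNamed a t) = App (cpsG \<rho> \<kappa> t) (\<kappa> a)"

lemma case_nat_Var: "(\<lambda>i. Var (case_nat a f i)) = case_nat (Var a) (\<lambda>i. Var (f i))"
  by (rule ext, rename_tac z, case_tac z) auto

lemma cpst_eq: "cpst L M t = cpsG (\<lambda>i. Var (L i)) (\<lambda>j. Var (M j)) t"
  and cpsc_eq: "cpsc L M c = cpscG (\<lambda>i. Var (L i)) (\<lambda>j. Var (M j)) c"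
  by (induct t and c arbitrary: L M and L M) (simp_all add: sp_def Let_def case_nat_Var)

lemma cpsG_sub [simp]: "sub \<sigma> (cpsG \<rho> \<kappa> t) = cpsG (\<lambda>i. sub \<sigma> (\<rho> i)) (\<lambda>j. sub \<sigma> (\<kappa> j)) t"
  and cpscG_sub [simp]: "sub \<sigma> (cpscG \<rho> \<kappa> c) = cpscG (\<lambda>i. sub \<sigma> (\<rho> i)) (\<lambda>j. sub \<sigma> (\<kappa> j)) c"
  by (induct t and c arbitrary: \<sigma> \<rho> \<kappa> and \<sigma> \<rho> \<kappa>) (simp_all add: nat.case_distrib cong del: nat.case_cong_weak)

lemma cpsG_Lam: "\<exists>B. cpsG \<rho> \<kappa> t = Lam B"
  by (cases t) (auto simp: comp_def ovl_def)


declare nat.case_cong_weak [cong del]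

lemma cpsG_liftL [simp]: "cpsG \<rho> \<kappa> (liftLt k t) = cpsG (\<lambda>i. \<rho> (if i < k then i else Suc i)) \<kappa> t"
  and cpscG_liftL [simp]: "cpscG \<rho> \<kappa> (liftLc k c) = cpscG (\<lambda>i. \<rho> (if i < k then i else Suc i)) \<kappa> c"
proof (induct t and c arbitrary: \<rho> \<kappa> k and \<rho> \<kappa> k)
  case (LLam t)
  have "(\<lambda>i. case_nat (Var 0) (\<lambda>i. liftT 0 (liftT 0 (\<rho> i))) (if i < Suc k then i else Suc i))
     = case_nat (Var 0) (\<lambda>i. liftT 0 (liftT 0 (\<rho> (if i < k then i else Suc i))))"
    by (rule ext, rename_tac z, case_tac z) auto
  then show ?case using LLam by (simp del: subst_simps)
qed simp_all

lemma cpsG_liftM [simp]: "cpsG \<rho> \<kappa> (liftMt k t) = cpsG \<rho> (\<lambda>i. \<kappa> (if i < k then i else Suc i)) t"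
  and cpscG_liftM [simp]: "cpscG \<rho> \<kappa> (liftMc k c) = cpscG \<rho> (\<lambda>i. \<kappa> (if i < k then i else Suc i)) c"
proof (induct t and c arbitrary: \<rho> \<kappa> k and \<rho> \<kappa> k)
  case (LMu c)
  have "(\<lambda>i. case_nat (Var 0) (\<lambda>i. liftT 0 (\<kappa> i)) (if i < Suc k then i else Suc i))
     = case_nat (Var 0) (\<lambda>i. liftT 0 (\<kappa> (if i < k then i else Suc i)))"
    by (rule ext, rename_tac z, case_tac z) auto
  then show ?case using LMu by (simp del: subst_simps)
qed simp_all

lemma cpsG_drop: "k \<notin> fcvt t \<Longrightarrow> (\<And>j. j \<noteq> k \<Longrightarrow> \<kappa>' j = \<kappa> (if j < k then j else j - 1)) \<Longrightarrow>
     cpsG \<rho> \<kappa> (dropMt k t) = cpsG \<rho> \<kappa>' t"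
  and cpscG_drop: "k \<notin> fcvc c \<Longrightarrow> (\<And>j. j \<noteq> k \<Longrightarrow> \<kappa>' j = \<kappa> (if j < k then j else j - 1)) \<Longrightarrow>
     cpscG \<rho> \<kappa> (dropMc k c) = cpscG \<rho> \<kappa>' c"
proof (induct t and c arbitrary: \<rho> \<kappa> \<kappa>' k and \<rho> \<kappa> \<kappa>' k)
  case (LMu c)
  let ?k0 = "case_nat (Var 0) (\<lambda>j. liftT 0 (\<kappa> j))"
  let ?k1 = "case_nat (Var 0) (\<lambda>j. liftT 0 (\<kappa>' j))"
  have "cpscG (\<lambda>i. liftT 0 (\<rho> i)) ?k0 (dropMc (Suc k) c) = cpscG (\<lambda>i. liftT 0 (\<rho> i)) ?k1 c"
  proof (rule LMu.hyps)
    show "Suc k \<notin> fcvc c" using LMu.prems by simp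
    fix j assume "j \<noteq> Suc k" then show "?k1 j = ?k0 (if j < Suc k then j else j - 1)"
      using LMu.prems(2) by (cases j) (auto split: nat.split simp del: subst_simps)
  qed
  then show ?case by (simp del: subst_simps)
next
  case (LNamed a u)
  have "cpsG \<rho> \<kappa> (dropMt k u) = cpsG \<rho> \<kappa>' u"
    by (rule LNamed.hyps) (use LNamed.prems in auto)
  then show ?case using LNamed.prems by (auto simp del: subst_simps)
next
  case (LLam t)
  have "cpsG (case_nat (Var 0) (\<lambda>i. liftT 0 (liftT 0 (\<rho> i)))) (\<lambda>j. liftT 0 (liftT 0 (\<kappa> j))) (dropMt k t)
      = cpsG (case_nat (Var 0) (\<lambda>i. liftT 0 (liftT 0 (\<rho> i)))) (\<lambda>j. liftT 0 (liftT 0 (\<kappa>' j))) t"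
    by (rule LLam.hyps) (use LLam.prems in auto)
  then show ?case by (simp del: subst_simps)
next
  case (LApp t r)
  have "cpsG \<rho> \<kappa> (dropMt k t) = cpsG \<rho> \<kappa>' t"
    by (rule LApp.hyps(1)) (use LApp.prems in auto)
  moreover have "cpsG \<rho> \<kappa> (dropMt k r) = cpsG \<rho> \<kappa>' r"
    by (rule LApp.hyps(2)) (use LApp.prems in auto)
  ultimately show ?case by (simp del: subst_simps)
next
  case (LSuc t)
  have "cpsG \<rho> \<kappa> (dropMt k t) = cpsG \<rho> \<kappa>' t"
    by (rule LSuc.hyps(1)) (use LSuc.prems in auto)
  then show ?case by (simp del: subst_simps)
next
  case (LNrec r s t)
  have "cpsG \<rho> \<kappa> (dropMt k r) = cpsG \<rho> \<kappa>' r"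
    by (rule LNrec.hyps(1)) (use LNrec.prems in auto)
  moreover have "cpsG \<rho> \<kappa> (dropMt k s) = cpsG \<rho> \<kappa>' s"
    by (rule LNrec.hyps(2)) (use LNrec.prems in auto)
  moreover have "cpsG \<rho> \<kappa> (dropMt k t) = cpsG \<rho> \<kappa>' t"
    by (rule LNrec.hyps(3)) (use LNrec.prems in auto)
  ultimately show ?case by (simp del: subst_simps)
qed (auto simp del: subst_simps)

lemma eta_lam: "Tconv (Lam (App (liftT 0 (Lam B)) (Var 0))) (Lam B)"
proof -
  have "Tconv (App (liftT 0 (Lam B)) (Var 0)) B"
    by (simp only: liftT_sub sub.simps, rule beta_eq, simp,
        rule sym, rule trans[OF _ sub_Var], rule arg_cong[where f="\<lambda>f. sub f B"],
        rule ext, rename_tac z, case_tac z, simp_all)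
  then show ?thesis by (rule Tconv_Lam)
qed

lemma eta_cps: "Tconv (Lam (App (liftT 0 (cpsG \<rho> \<kappa> t)) (Var 0))) (cpsG \<rho> \<kappa> t)"
proof -
  obtain B where "cpsG \<rho> \<kappa> t = Lam B" using cpsG_Lam by blast
  then show ?thesis by (simp only:) (rule eta_lam)
qed


lemma Tconv_comp1: "Tconv a a' \<Longrightarrow> Tconv (comp a b) (comp a' b)"
  unfolding comp_def by (intro Tconv_Lam Tconv_AppL Tconv_lift)
lemma Tconv_comp2: "Tconv b b' \<Longrightarrow> Tconv (comp a b) (comp a b')"
  unfolding comp_def by (intro Tconv_Lam Tconv_AppR Tconv_AppL Tconv_lift)
lemma Tconv_comp: "Tconv a a' \<Longrightarrow> Tconv b b' \<Longrightarrow> Tconv (comp a b) (comp a' b')"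
  by (meson Tconv_comp1 Tconv_comp2 Tconv_trans)
lemma Tconv_sp: "Tconv a a' \<Longrightarrow> Tconv (sp a) (sp a')"
  unfolding sp_def by (intro Tconv_Lam Tconv_comp1 Tconv_lift)

lemma Tconv_LSuc: "Tconv a a' \<Longrightarrow> Tconv (Lam (App (liftT 0 a) K)) (Lam (App (liftT 0 a') K))"
  by (intro Tconv_Lam Tconv_AppL Tconv_lift)

lemma Tconv_LNrec: "Tconv a a' \<Longrightarrow> Tconv r r' \<Longrightarrow> Tconv s s' \<Longrightarrow>
  Tconv (Lam (App (liftT 0 a) (Lam (App (Nrec (liftT 0 (liftT 0 r)) (liftT 0 (liftT 0 (sp s))) (Var 0)) (Var 1)))))
        (Lam (App (liftT 0 a') (Lam (App (Nrec (liftT 0 (liftT 0 r')) (liftT 0 (liftT 0 (sp s'))) (Var 0)) (Var 1)))))"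
proof -
  assume a: "Tconv a a'" and r: "Tconv r r'" and s: "Tconv s s'"
  have "Tconv (Nrec (liftT 0 (liftT 0 r)) (liftT 0 (liftT 0 (sp s))) (Var 0))
              (Nrec (liftT 0 (liftT 0 r')) (liftT 0 (liftT 0 (sp s'))) (Var 0))"
    by (rule Tconv_trans[OF Tconv_N1 Tconv_N2]) (intro Tconv_lift Tconv_sp r s)+
  then show ?thesis using a by (intro Tconv_Lam Tconv_App Tconv_lift Tconv_AppL) auto
qed

lemma cpsG_substL: "(\<And>i. i < k \<Longrightarrow> \<rho>' i = \<rho> i) \<Longrightarrow> \<rho>' k = cpsG \<rho> \<kappa> r \<Longrightarrow> (\<And>i. k < i \<Longrightarrow> \<rho>' i = \<rho> (i - 1)) \<Longrightarrow>
    Tconv (cpsG \<rho> \<kappa> (substLt k r t)) (cpsG \<rho>' \<kappa> t)"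
  and cpscG_substL: "(\<And>i. i < k \<Longrightarrow> \<rho>' i = \<rho> i) \<Longrightarrow> \<rho>' k = cpsG \<rho> \<kappa> r \<Longrightarrow> (\<And>i. k < i \<Longrightarrow> \<rho>' i = \<rho> (i - 1)) \<Longrightarrow>
    Tconv (cpscG \<rho> \<kappa> (substLc k r c)) (cpscG \<rho>' \<kappa> c)"
proof (induct t and c arbitrary: \<rho> \<rho>' \<kappa> k r and \<rho> \<rho>' \<kappa> k r)
  case (LVar i)
  show ?case
  proof (cases "i < k")
    case True then show ?thesis using LVar by (simp del: subst_simps)
  next
    case False
    show ?thesis
    proof (cases "i = k")
      case True then show ?thesis using LVar by (simp del: subst_simps add: Tconv_sym[OF eta_cps])
    next
      case False
      then show ?thesis using LVar \<open>\<not> i < k\<close> by (simp del: subst_simps)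
    qed
  qed
next
  case (LLam t)
  have "Tconv (cpsG (case_nat (Var 0) (\<lambda>i. liftT 0 (liftT 0 (\<rho> i)))) (\<lambda>j. liftT 0 (liftT 0 (\<kappa> j))) (substLt (Suc k) (liftLt 0 r) t))
      (cpsG (case_nat (Var 0) (\<lambda>i. liftT 0 (liftT 0 (\<rho>' i)))) (\<lambda>j. liftT 0 (liftT 0 (\<kappa> j))) t)"
  proof (rule LLam.hyps)
    fix i assume "i < Suc k" then show "case_nat (Var 0) (\<lambda>i. liftT 0 (liftT 0 (\<rho>' i))) i = case_nat (Var 0) (\<lambda>i. liftT 0 (liftT 0 (\<rho> i))) i"
      using LLam.prems by (cases i) auto
  next
    show "case_nat (Var 0) (\<lambda>i. liftT 0 (liftT 0 (\<rho>' i))) (Suc k) = cpsG (case_nat (Var 0) (\<lambda>i. liftT 0 (liftT 0 (\<rho> i)))) (\<lambda>j. liftT 0 (liftT 0 (\<kappa> j))) (liftLt 0 r)"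
      using LLam.prems by simp
  next
    fix i assume "Suc k < i" then show "case_nat (Var 0) (\<lambda>i. liftT 0 (liftT 0 (\<rho>' i))) i = case_nat (Var 0) (\<lambda>i. liftT 0 (liftT 0 (\<rho> i))) (i - 1)"
    proof -
      assume "Suc k < i"
      then obtain m where m: "i = Suc (Suc m)" and km: "k < Suc m" by (cases i; cases "i - 1") auto
      show ?thesis using LLam.prems(3)[of "Suc m"] km unfolding m by (simp del: subst_simps)
    qed
  qed
  then show ?case by (simp only: substLt.simps cpsG.simps) (intro Tconv_Lam Tconv_AppR)
next
  case (LApp t s)
  have "Tconv (cpsG \<rho> \<kappa> (substLt k r t)) (cpsG \<rho>' \<kappa> t)" by (rule LApp.hyps(1)) (use LApp.prems in auto)
  moreover have "Tconv (cpsG \<rho> \<kappa> (substLt k r s)) (cpsG \<rho>' \<kappa> s)" by (rule LApp.hyps(2)) (use LApp.prems in auto)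
  ultimately show ?case by (simp only: substLt.simps cpsG.simps) (rule Tconv_comp)
next
  case (LMu c)
  have "Tconv (cpscG (\<lambda>i. liftT 0 (\<rho> i)) (case_nat (Var 0) (\<lambda>j. liftT 0 (\<kappa> j))) (substLc k (liftMt 0 r) c))
             (cpscG (\<lambda>i. liftT 0 (\<rho>' i)) (case_nat (Var 0) (\<lambda>j. liftT 0 (\<kappa> j))) c)"
    by (rule LMu.hyps) (use LMu.prems in auto)
  then show ?case by (simp only: substLt.simps cpsG.simps) (intro Tconv_Lam)
next
  case (LSuc t)
  have "Tconv (cpsG \<rho> \<kappa> (substLt k r t)) (cpsG \<rho>' \<kappa> t)" by (rule LSuc.hyps(1)) (use LSuc.prems in auto)
  then show ?case by (simp only: substLt.simps cpsG.simps) (rule Tconv_LSuc)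
next
  case (LNrec s1 s2 t)
  have "Tconv (cpsG \<rho> \<kappa> (substLt k r s1)) (cpsG \<rho>' \<kappa> s1)" by (rule LNrec.hyps(1)) (use LNrec.prems in auto)
  moreover have "Tconv (cpsG \<rho> \<kappa> (substLt k r s2)) (cpsG \<rho>' \<kappa> s2)" by (rule LNrec.hyps(2)) (use LNrec.prems in auto)
  moreover have "Tconv (cpsG \<rho> \<kappa> (substLt k r t)) (cpsG \<rho>' \<kappa> t)" by (rule LNrec.hyps(3)) (use LNrec.prems in auto)
  ultimately show ?case by (simp only: substLt.simps cpsG.simps) (rule Tconv_LNrec)
next
  case (LNamed a u)
  have "Tconv (cpsG \<rho> \<kappa> (substLt k r u)) (cpsG \<rho>' \<kappa> u)" by (rule LNamed.hyps(1)) (use LNamed.prems in auto)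
  then show ?case by (simp only: substLt.simps cpsG.simps substLc.simps cpscG.simps) (rule Tconv_AppL)
qed (simp_all del: subst_simps)



primrec contE :: "(nat \<Rightarrow> tm) \<Rightarrow> (nat \<Rightarrow> tm) \<Rightarrow> ectx \<Rightarrow> tm \<Rightarrow> tm" where
  "contE \<rho> \<kappa> Hole K = K"
| "contE \<rho> \<kappa> (EApp E s) K = contE \<rho> \<kappa> E (Lam (App (App (Var 0) (liftT 0 (cpsG \<rho> \<kappa> s))) (liftT 0 K)))"
| "contE \<rho> \<kappa> (ESuc E) K = contE \<rho> \<kappa> E (Lam (App (liftT 0 K) (TSuc (Var 0))))"
| "contE \<rho> \<kappa> (ENrec r s E) K =
     contE \<rho> \<kappa> E (Lam (App (Nrec (liftT 0 (cpsG \<rho> \<kappa> r)) (liftT 0 (sp (cpsG \<rho> \<kappa> s))) (Var 0)) (liftT 0 K)))"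

lemma contE_sub [simp]: "sub \<sigma> (contE \<rho> \<kappa> E K) = contE (\<lambda>i. sub \<sigma> (\<rho> i)) (\<lambda>j. sub \<sigma> (\<kappa> j)) E (sub \<sigma> K)"
  by (induct E arbitrary: K) simp_all

lemma contE_liftLe [simp]: "contE \<rho> \<kappa> (liftLe k E) K = contE (\<lambda>i. \<rho> (if i < k then i else Suc i)) \<kappa> E K"
  by (induct E arbitrary: K) (simp_all del: subst_simps)

lemma contE_liftMe [simp]: "contE \<rho> \<kappa> (liftMe k E) K = contE \<rho> (\<lambda>i. \<kappa> (if i < k then i else Suc i)) E K"
  by (induct E arbitrary: K) (simp_all del: subst_simps)

lemma fill_conv: "Tconv (App (cpsG \<rho> \<kappa> (fill E v)) K) (App (cpsG \<rho> \<kappa> v) (contE \<rho> \<kappa> E K))"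
proof (induct E arbitrary: K)
  case Hole then show ?case by simp
next
  case (EApp E s)
  have "Tconv (App (cpsG \<rho> \<kappa> (fill (EApp E s) v)) K)
     (App (cpsG \<rho> \<kappa> (fill E v)) (Lam (App (App (Var 0) (liftT 0 (cpsG \<rho> \<kappa> s))) (liftT 0 K))))"
    by (simp only: fill.simps cpsG.simps comp_def) (rule beta_eq, simp)
  then show ?case using EApp by (simp only: contE.simps) (rule Tconv_trans)
next
  case (ESuc E)
  have "Tconv (App (cpsG \<rho> \<kappa> (fill (ESuc E) v)) K)
     (App (cpsG \<rho> \<kappa> (fill E v)) (Lam (App (liftT 0 K) (TSuc (Var 0)))))"
    by (simp only: fill.simps cpsG.simps) (rule beta_eq, simp)
  then show ?case using ESuc by (simp only: contE.simps) (rule Tconv_trans)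
next
  case (ENrec r s E)
  have "Tconv (App (cpsG \<rho> \<kappa> (fill (ENrec r s E) v)) K)
     (App (cpsG \<rho> \<kappa> (fill E v)) (Lam (App (Nrec (liftT 0 (cpsG \<rho> \<kappa> r)) (liftT 0 (sp (cpsG \<rho> \<kappa> s))) (Var 0)) (liftT 0 K))))"
    by (simp only: fill.simps cpsG.simps) (rule beta_eq, simp)
  then show ?case using ENrec by (simp only: contE.simps) (rule Tconv_trans)
qed


lemma cpsG_msub: "(\<And>j. j \<noteq> k \<Longrightarrow> \<kappa>' j = \<kappa> j) \<Longrightarrow> \<kappa>' k = contE \<rho> \<kappa> E (\<kappa> b) \<Longrightarrow>
    Tconv (cpsG \<rho> \<kappa> (msubt k b E t)) (cpsG \<rho> \<kappa>' t)"
  and cpscG_msub: "(\<And>j. j \<noteq> k \<Longrightarrow> \<kappa>' j = \<kappa> j) \<Longrightarrow> \<kappa>' k = contE \<rho> \<kappa> E (\<kappa> b) \<Longrightarrow>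
    Tconv (cpscG \<rho> \<kappa> (msubc k b E c)) (cpscG \<rho> \<kappa>' c)"
proof (induct t and c arbitrary: \<rho> \<kappa> \<kappa>' k b E and \<rho> \<kappa> \<kappa>' k b E)
  case (LLam t)
  have "Tconv (cpsG (case_nat (Var 0) (\<lambda>i. liftT 0 (liftT 0 (\<rho> i)))) (\<lambda>j. liftT 0 (liftT 0 (\<kappa> j))) (msubt k b (liftLe 0 E) t))
      (cpsG (case_nat (Var 0) (\<lambda>i. liftT 0 (liftT 0 (\<rho> i)))) (\<lambda>j. liftT 0 (liftT 0 (\<kappa>' j))) t)"
    by (rule LLam.hyps) (use LLam.prems in simp_all)
  then show ?case by (simp only: msubt.simps cpsG.simps) (intro Tconv_Lam Tconv_AppR)
next
  case (LApp t s)
  have "Tconv (cpsG \<rho> \<kappa> (msubt k b E t)) (cpsG \<rho> \<kappa>' t)" by (rule LApp.hyps(1)) (use LApp.prems in auto)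
  moreover have "Tconv (cpsG \<rho> \<kappa> (msubt k b E s)) (cpsG \<rho> \<kappa>' s)" by (rule LApp.hyps(2)) (use LApp.prems in auto)
  ultimately show ?case by (simp only: msubt.simps cpsG.simps) (rule Tconv_comp)
next
  case (LMu c)
  have "Tconv (cpscG (\<lambda>i. liftT 0 (\<rho> i)) (case_nat (Var 0) (\<lambda>j. liftT 0 (\<kappa> j))) (msubc (Suc k) (Suc b) (liftMe 0 E) c))
             (cpscG (\<lambda>i. liftT 0 (\<rho> i)) (case_nat (Var 0) (\<lambda>j. liftT 0 (\<kappa>' j))) c)"
  proof (rule LMu.hyps)
    fix j assume "j \<noteq> Suc k" then show "case_nat (Var 0) (\<lambda>j. liftT 0 (\<kappa>' j)) j = case_nat (Var 0) (\<lambda>j. liftT 0 (\<kappa> j)) j"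
      using LMu.prems by (cases j) (auto simp del: subst_simps)
  next
    show "case_nat (Var 0) (\<lambda>j. liftT 0 (\<kappa>' j)) (Suc k) =
        contE (\<lambda>i. liftT 0 (\<rho> i)) (case_nat (Var 0) (\<lambda>j. liftT 0 (\<kappa> j))) (liftMe 0 E) (case_nat (Var 0) (\<lambda>j. liftT 0 (\<kappa> j)) (Suc b))"
      using LMu.prems by simp
  qed
  then show ?case by (simp only: msubt.simps cpsG.simps) (intro Tconv_Lam)
next
  case (LSuc t)
  have "Tconv (cpsG \<rho> \<kappa> (msubt k b E t)) (cpsG \<rho> \<kappa>' t)" by (rule LSuc.hyps(1)) (use LSuc.prems in auto)
  then show ?case by (simp only: msubt.simps cpsG.simps) (rule Tconv_LSuc)
next
  case (LNrec s1 s2 t)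
  have "Tconv (cpsG \<rho> \<kappa> (msubt k b E s1)) (cpsG \<rho> \<kappa>' s1)" by (rule LNrec.hyps(1)) (use LNrec.prems in auto)
  moreover have "Tconv (cpsG \<rho> \<kappa> (msubt k b E s2)) (cpsG \<rho> \<kappa>' s2)" by (rule LNrec.hyps(2)) (use LNrec.prems in auto)
  moreover have "Tconv (cpsG \<rho> \<kappa> (msubt k b E t)) (cpsG \<rho> \<kappa>' t)" by (rule LNrec.hyps(3)) (use LNrec.prems in auto)
  ultimately show ?case by (simp only: msubt.simps cpsG.simps) (rule Tconv_LNrec)
next
  case (LNamed a u)
  have IH: "Tconv (cpsG \<rho> \<kappa> (msubt k b E u)) (cpsG \<rho> \<kappa>' u)" by (rule LNamed.hyps(1)) (use LNamed.prems in auto)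
  show ?case
  proof (cases "a = k")
    case True
    have "Tconv (App (cpsG \<rho> \<kappa> (fill E (msubt k b E u))) (\<kappa> b))
                (App (cpsG \<rho> \<kappa> (msubt k b E u)) (contE \<rho> \<kappa> E (\<kappa> b)))" by (rule fill_conv)
    also have "Tconv \<dots> (App (cpsG \<rho> \<kappa>' u) (\<kappa>' a))" using IH LNamed.prems True by (simp del: subst_simps add: Tconv_AppL)
    finally show ?thesis using True by (simp del: subst_simps)
  next
    case False
    then show ?thesis using IH LNamed.prems by (simp del: subst_simps add: Tconv_AppL)
  qed
qed (simp_all del: subst_simps)



lemma beta_trans: "Tconv (sub (case_nat r Var) t) v \<Longrightarrow> Tconv (App (Lam t) r) v"
  by (rule Tconv_trans[OF beta_eq[OF refl]])
lemma beta_trans_AppL: "Tconv (App (sub (case_nat r Var) t) c) v \<Longrightarrow> Tconv (App (App (Lam t) r) c) v"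
  by (rule Tconv_trans[OF Tconv_AppL[OF beta_eq[OF refl]]])

lemma beta_trans_AppLL: "Tconv (App (App (sub (case_nat r Var) t) d) c) v \<Longrightarrow> Tconv (App (App (App (Lam t) r) d) c) v"
  by (rule Tconv_trans[OF Tconv_AppL[OF Tconv_AppL[OF beta_eq[OF refl]]]])
lemma nrec0_trans: "Tconv (App r c) v \<Longrightarrow> Tconv (App (Nrec r s Zero) c) v"
  by (rule Tconv_trans[OF Tconv_AppL[OF Tred_conv[OF Tred.nrec0]]])
lemma nrecS_trans: "Tconv (App (App (App s t) (Nrec r s t)) c) v \<Longrightarrow> Tconv (App (Nrec r s (TSuc t)) c) v"
  by (rule Tconv_trans[OF Tconv_AppL[OF Tred_conv[OF Tred.nrecS]]])

definition num :: "nat \<Rightarrow> tm" where "num n = (TSuc ^^ n) Zero"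

lemma num_Suc: "num (Suc n) = TSuc (num n)" by (simp add: num_def)
lemma num_0: "num 0 = Zero" by (simp add: num_def)
lemma sub_num [simp]: "sub \<sigma> (num n) = num n"
  by (induct n) (simp_all add: num_Suc num_0)

lemma lnum_Suc: "lnum (Suc n) = LSuc (lnum n)" by (simp add: lnum_def)
lemma lnum_0: "lnum 0 = LZero" by (simp add: lnum_def)

lemma cps_lnum: "Tconv (cpsG \<rho> \<kappa> (lnum n)) (ovl (num n))"
proof (induct n)
  case 0 then show ?case by (simp add: lnum_0 num_0)
next
  case (Suc n)
  have "Tconv (cpsG \<rho> \<kappa> (lnum (Suc n))) (Lam (App (liftT 0 (ovl (num n))) (Lam (App (Var 1) (TSuc (Var 0))))))"
    unfolding lnum_Suc cpsG.simps by (rule Tconv_LSuc[OF Suc])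
  also have "Tconv \<dots> (ovl (num (Suc n)))"
    apply (simp only: ovl_def num_Suc)
    apply (rule Tconv_Lam)
    apply (simp only: liftT_sub sub.simps)
    apply (rule beta_trans, simp)
    apply (rule beta_trans, simp)
    done
  finally show ?case .
qed

lemma fresh_msub: "k \<noteq> b \<Longrightarrow> k \<notin> fcvt (msubt k b Hole t)"
  and fresh_msubc: "k \<noteq> b \<Longrightarrow> k \<notin> fcvc (msubc k b Hole c)"
  by (induct t and c arbitrary: k b and k b) auto

lemma eta_conv: "Tconv X (Lam B) \<Longrightarrow> Tconv (Lam (App (liftT 0 X) (Var 0))) X"
proof -
  assume h: "Tconv X (Lam B)"
  have "Tconv (Lam (App (liftT 0 X) (Var 0))) (Lam (App (liftT 0 (Lam B)) (Var 0)))"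
    using h by (intro Tconv_Lam Tconv_AppL Tconv_lift)
  also have "Tconv \<dots> (Lam B)" by (rule eta_lam)
  also have "Tconv \<dots> X" using h by (rule Tconv_sym)
  finally show ?thesis .
qed

lemma nrec_num_lam: "\<exists>B. Tconv (Nrec (Lam R) (sp S) (num n)) (Lam B)"
proof (cases n)
  case 0 then show ?thesis by (auto simp: num_0 intro!: exI Tred_conv Tred.nrec0)
next
  case (Suc m)
  have "Tconv (Nrec (Lam R) (sp S) (num n)) (App (App (sp S) (num m)) (Nrec (Lam R) (sp S) (num m)))"
    unfolding Suc num_Suc by (rule Tred_conv, rule Tred.nrecS)
  also have "Tconv \<dots> (comp (comp S (ovl (num m))) (Nrec (Lam R) (sp S) (num m)))"
    apply (simp only: sp_def)
    apply (rule beta_trans_AppL, simp only: sub.simps)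
    apply (rule beta_trans, simp)
    done
  finally show ?thesis unfolding comp_def by blast
qed

lemma main_red: "lmred_t t t' \<Longrightarrow> Tconv (cpsG \<rho> \<kappa> t) (cpsG \<rho> \<kappa> t')"
  and main_redc: "lmred_c c c' \<Longrightarrow> Tconv (cpscG \<rho> \<kappa> c) (cpscG \<rho> \<kappa> c')"
proof (induction arbitrary: \<rho> \<kappa> and \<rho> \<kappa> rule: lmred_t_lmred_c.inducts)
  case (beta t r)
  let ?R = "cpsG \<rho> \<kappa> r"
  have 1: "Tconv (cpsG \<rho> \<kappa> (LApp (LLam t) r))
      (Lam (App (cpsG (case_nat (liftT 0 ?R) (\<lambda>i. liftT 0 (\<rho> i))) (\<lambda>j. liftT 0 (\<kappa> j)) t) (Var 0)))"
    apply (simp only: cpsG.simps comp_def)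
    apply (rule Tconv_Lam)
    apply (simp only: liftT_sub sub.simps)
    apply (rule beta_trans, simp)
    apply (rule beta_trans, simp)
    apply (rule beta_trans_AppL, simp add: nat.case_distrib)
    done
  have 2: "Lam (App (cpsG (case_nat (liftT 0 ?R) (\<lambda>i. liftT 0 (\<rho> i))) (\<lambda>j. liftT 0 (\<kappa> j)) t) (Var 0))
     = Lam (App (liftT 0 (cpsG (case_nat ?R \<rho>) \<kappa> t)) (Var 0))"
    by (simp add: nat.case_distrib)
  have 3: "Tconv (cpsG \<rho> \<kappa> (substLt 0 r t)) (cpsG (case_nat ?R \<rho>) \<kappa> t)"
    by (rule cpsG_substL) (auto split: nat.split)
  show ?case using 1 eta_cps[of "case_nat ?R \<rho>" \<kappa> t] Tconv_sym[OF 3] unfolding 2 by (meson Tconv_trans)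
next
  case (muS c)
  let ?K = "Lam (App (Var 1) (TSuc (Var 0)))"
  have 1: "Tconv (cpsG \<rho> \<kappa> (LSuc (LMu c))) (Lam (cpscG (\<lambda>i. liftT 0 (\<rho> i)) (case_nat ?K (\<lambda>j. liftT 0 (\<kappa> j))) c))"
    apply (simp only: cpsG.simps)
    apply (rule Tconv_Lam)
    apply (simp only: liftT_sub sub.simps)
    apply (rule beta_trans, simp add: nat.case_distrib)
    done
  have 2: "Tconv (cpscG (\<lambda>i. liftT 0 (\<rho> i)) (case_nat (Var 0) (\<lambda>j. liftT 0 (\<kappa> j))) (msubc 0 0 (ESuc Hole) c))
                 (cpscG (\<lambda>i. liftT 0 (\<rho> i)) (case_nat ?K (\<lambda>j. liftT 0 (\<kappa> j))) c)"
    by (rule cpscG_msub) (auto split: nat.split)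
  show ?case using 1 Tconv_sym[OF Tconv_Lam[OF 2]] by (simp only: cpsG.simps) (rule Tconv_trans)
next
  case (muR c s)
  let ?K = "Lam (App (App (Var 0) (liftT 0 (liftT 0 (cpsG \<rho> \<kappa> s)))) (Var 1))"
  have 1: "Tconv (cpsG \<rho> \<kappa> (LApp (LMu c) s)) (Lam (cpscG (\<lambda>i. liftT 0 (\<rho> i)) (case_nat ?K (\<lambda>j. liftT 0 (\<kappa> j))) c))"
    apply (simp only: cpsG.simps comp_def)
    apply (rule Tconv_Lam)
    apply (simp only: liftT_sub sub.simps)
    apply (rule beta_trans, simp add: nat.case_distrib)
    done
  have 2: "Tconv (cpscG (\<lambda>i. liftT 0 (\<rho> i)) (case_nat (Var 0) (\<lambda>j. liftT 0 (\<kappa> j))) (msubc 0 0 (EApp Hole (liftMt 0 s)) c))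
                 (cpscG (\<lambda>i. liftT 0 (\<rho> i)) (case_nat ?K (\<lambda>j. liftT 0 (\<kappa> j))) c)"
    by (rule cpscG_msub) (auto split: nat.split)
  show ?case using 1 Tconv_sym[OF Tconv_Lam[OF 2]] by (simp only: cpsG.simps) (rule Tconv_trans)
next
  case (muN r s c)
  let ?K = "Lam (App (Nrec (liftT 0 (liftT 0 (cpsG \<rho> \<kappa> r))) (liftT 0 (liftT 0 (sp (cpsG \<rho> \<kappa> s)))) (Var 0)) (Var 1))"
  have 1: "Tconv (cpsG \<rho> \<kappa> (LNrec r s (LMu c))) (Lam (cpscG (\<lambda>i. liftT 0 (\<rho> i)) (case_nat ?K (\<lambda>j. liftT 0 (\<kappa> j))) c))"
    apply (simp only: cpsG.simps)
    apply (rule Tconv_Lam)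
    apply (simp only: liftT_sub sub.simps)
    apply (rule beta_trans, simp add: nat.case_distrib)
    done
  have 2: "Tconv (cpscG (\<lambda>i. liftT 0 (\<rho> i)) (case_nat (Var 0) (\<lambda>j. liftT 0 (\<kappa> j))) (msubc 0 0 (ENrec (liftMt 0 r) (liftMt 0 s) Hole) c))
                 (cpscG (\<lambda>i. liftT 0 (\<rho> i)) (case_nat ?K (\<lambda>j. liftT 0 (\<kappa> j))) c)"
    by (rule cpscG_msub) (auto split: nat.split)
  show ?case using 1 Tconv_sym[OF Tconv_Lam[OF 2]] by (simp only: cpsG.simps) (rule Tconv_trans)
next
  case (muEta t)
  have d: "cpsG (\<lambda>i. liftT 0 (\<rho> i)) (\<lambda>j. liftT 0 (\<kappa> j)) (dropMt 0 t)
         = cpsG (\<lambda>i. liftT 0 (\<rho> i)) (case_nat (Var 0) (\<lambda>j. liftT 0 (\<kappa> j))) t"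
    by (rule cpsG_drop) (use muEta in \<open>auto split: nat.split simp del: subst_simps\<close>)
  have e: "cpsG (\<lambda>i. liftT 0 (\<rho> i)) (case_nat (Var 0) (\<lambda>j. liftT 0 (\<kappa> j))) t = liftT 0 (cpsG \<rho> \<kappa> (dropMt 0 t))"
    unfolding d[symmetric] by simp
  show ?case by (simp only: cpsG.simps cpscG.simps e nat.case) (rule eta_cps)
next
  case (muI a c)
  let ?k1 = "case_nat (\<kappa> a) \<kappa>"
  have 1: "Tconv (cpscG \<rho> \<kappa> (LNamed a (LMu c))) (cpscG \<rho> ?k1 c)"
    apply (simp only: cpscG.simps cpsG.simps)
    apply (rule beta_trans, simp add: nat.case_distrib)
    done
  have 2: "cpscG \<rho> \<kappa> (dropMc 0 (msubc 0 (Suc a) Hole c)) = cpscG \<rho> ?k1 (msubc 0 (Suc a) Hole c)"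
    by (rule cpscG_drop) (auto simp: fresh_msubc split: nat.split)
  have 3: "Tconv (cpscG \<rho> ?k1 (msubc 0 (Suc a) Hole c)) (cpscG \<rho> ?k1 c)"
    by (rule cpscG_msub) (auto split: nat.split)
  show ?case unfolding 2 using 1 Tconv_sym[OF 3] by (rule Tconv_trans)
next
  case (nrec0 r s)
  have "Tconv (cpsG \<rho> \<kappa> (LNrec r s LZero)) (Lam (App (liftT 0 (cpsG \<rho> \<kappa> r)) (Var 0)))"
    apply (simp only: cpsG.simps ovl_def)
    apply (rule Tconv_Lam)
    apply (simp only: liftT_sub sub.simps)
    apply (rule beta_trans, simp)
    apply (rule beta_trans, simp)
    apply (rule nrec0_trans, simp)
    done
  then show ?case using eta_cps by (rule Tconv_trans)
next
  case (nrecS r s n)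
  let ?R = "cpsG \<rho> \<kappa> r" and ?S = "cpsG \<rho> \<kappa> s" and ?N = "num n"
  let ?Nn = "Nrec (liftT 0 ?R) (liftT 0 (sp ?S)) ?N"
  let ?Nz = "Nrec ?R (sp ?S) ?N"
  let ?K = "Lam (App (Nrec (liftT 0 (liftT 0 ?R)) (liftT 0 (liftT 0 (sp ?S))) (Var 0)) (Var 1))"
  let ?L' = "Lam (App (comp (comp (liftT 0 ?S) (ovl ?N)) ?Nn) (Var 0))"
  let ?Q' = "Lam (App ?Nn (Var 0))"
  let ?RHS' = "comp (comp ?S (ovl ?N)) ?Q'"
  have a0: "cpsG \<rho> \<kappa> (LNrec r s (LSuc (lnum n))) = Lam (App (liftT 0 (cpsG \<rho> \<kappa> (lnum (Suc n)))) ?K)"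
    by (simp only: cpsG.simps(7) lnum_Suc)
  have a: "Tconv (cpsG \<rho> \<kappa> (LNrec r s (LSuc (lnum n)))) (Lam (App (liftT 0 (ovl (num (Suc n)))) ?K))"
    unfolding a0 by (rule Tconv_LSuc[OF cps_lnum])
  have b1: "liftT 0 (ovl (num (Suc n))) = Lam (App (Var 0) (TSuc (num n)))" by (simp add: ovl_def num_Suc)
  have b: "Tconv (Lam (App (liftT 0 (ovl (num (Suc n)))) ?K)) ?L'"
    unfolding b1
    apply (rule Tconv_Lam)
    apply (rule beta_trans, simp)
    apply (rule beta_trans, simp)
    apply (rule nrecS_trans, simp only: sp_def)
    apply (rule beta_trans_AppLL, simp only: sub.simps)
    apply (rule beta_trans_AppL, simp)
    done
  have q: "Tconv (cpsG \<rho> \<kappa> (LNrec r s (lnum n))) ?Q'"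
  proof -
    have "Tconv (cpsG \<rho> \<kappa> (LNrec r s (lnum n))) (Lam (App (liftT 0 (ovl ?N)) ?K))"
      by (simp only: cpsG.simps(7)) (rule Tconv_LSuc[OF cps_lnum])
    also have "Tconv \<dots> ?Q'"
      apply (simp only: ovl_def)
      apply (rule Tconv_Lam)
      apply (simp only: liftT_sub sub.simps)
      apply (rule beta_trans, simp)
      apply (rule beta_trans, simp)
      done
    finally show ?thesis .
  qed
  have c: "Tconv (cpsG \<rho> \<kappa> (LApp (LApp s (lnum n)) (LNrec r s (lnum n)))) ?RHS'"
    by (simp only: cpsG.simps(3)) (intro Tconv_comp Tconv_refl cps_lnum q)
  obtain B where B: "?RHS' = Lam B" by (simp add: comp_def)
  have d: "Tconv (Lam (App (liftT 0 ?RHS') (Var 0))) ?RHS'"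
    by (rule eta_conv[of _ B]) (simp only: B Tconv_refl)
  obtain R0 where R0: "?R = Lam R0" using cpsG_Lam by blast
  obtain B' where B': "Tconv ?Nz (Lam B')" using nrec_num_lam[of R0 ?S n] unfolding R0 by blast
  have n0: "Tconv (Lam (App (liftT 0 ?Nz) (Var 0))) ?Nz" by (rule eta_conv[OF B'])
  have n1: "liftT 0 ?Q' = liftT 0 (Lam (App (liftT 0 ?Nz) (Var 0)))" by simp
  have n2: "?Nn = liftT 0 ?Nz" by simp
  have qn: "Tconv (liftT 0 ?Q') ?Nn" unfolding n1 n2 by (rule Tconv_lift[OF n0])
  have e0: "liftT 0 ?RHS' = comp (comp (liftT 0 ?S) (ovl ?N)) (liftT 0 ?Q')" by simp
  have e: "Tconv (Lam (App (liftT 0 ?RHS') (Var 0))) ?L'"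
    unfolding e0 by (intro Tconv_Lam Tconv_AppL Tconv_comp2 qn)
  have "Tconv (cpsG \<rho> \<kappa> (LNrec r s (LSuc (lnum n)))) ?L'" using a b by (rule Tconv_trans)
  also have "Tconv \<dots> (Lam (App (liftT 0 ?RHS') (Var 0)))" using e by (rule Tconv_sym)
  also have "Tconv \<dots> ?RHS'" by (rule d)
  also have "Tconv \<dots> (cpsG \<rho> \<kappa> (LApp (LApp s (lnum n)) (LNrec r s (lnum n))))" using c by (rule Tconv_sym)
  finally show ?case .
next
  case (c_lam t t')
  then show ?case by (simp only: cpsG.simps) (intro Tconv_Lam Tconv_AppR)
next
  case (c_appL t t' s)
  then show ?case by (simp only: cpsG.simps) (intro Tconv_comp1)
next
  case (c_appR s s' t)
  then show ?case by (simp only: cpsG.simps) (intro Tconv_comp2)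
next
  case (c_mu c c')
  then show ?case by (simp only: cpsG.simps) (intro Tconv_Lam)
next
  case (c_suc t t')
  then show ?case by (simp only: cpsG.simps) (intro Tconv_LSuc)
next
  case (c_nrec1 r r' s t)
  then show ?case by (simp only: cpsG.simps) (intro Tconv_LNrec Tconv_refl)
next
  case (c_nrec2 s s' r t)
  then show ?case by (simp only: cpsG.simps) (intro Tconv_LNrec Tconv_refl)
next
  case (c_nrec3 t t' r s)
  then show ?case by (simp only: cpsG.simps) (intro Tconv_LNrec Tconv_refl)
next
  case (c_named t t' a)
  then show ?case by (simp only: cpscG.simps) (intro Tconv_AppL)
qed


lemma equivclp_map2: "(\<And>a b. r a b \<Longrightarrow> equivclp q (f a) (f b)) \<Longrightarrow> equivclp r a b \<Longrightarrow> equivclp q (f a) (f b)"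
proof -
  assume h: "\<And>a b. r a b \<Longrightarrow> equivclp q (f a) (f b)" and e: "equivclp r a b"
  from e show ?thesis
  proof (induction rule: equivclp_induct)
    case base then show ?case by simp
  next
    case (step y z)
    then show ?case using h equivclp_trans equivclp_sym by metis
  qed
qed

theorem mainTheorem6:
  fixes t1 t2 :: lmtm
  assumes "lmconv t1 t2"
  shows "Tconv (cps t1) (cps t2)"
proof -
  have "equivclp Tred (cpsG (\<lambda>i. Var (2 * i)) (\<lambda>j. Var (2 * j + 1)) t1) (cpsG (\<lambda>i. Var (2 * i)) (\<lambda>j. Var (2 * j + 1)) t2)"
    by (rule equivclp_map2[where r=lmred_t], fold Tconv_def, erule main_red)
       (use assms in \<open>simp add: lmconv_def\<close>)
  then show ?thesis unfolding cps_def cpst_eq Tconv_def .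
qed

end
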